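(* Let $d>1$ be an integer, let $q$ be a square power of an odd prime $p$ with $q \equiv 1 \pmod{2d}$, and let $\chi$ be a multiplicative character of $\mathbb{F}_q$ of order $d$. If the clique number of $GP(q,d)$ is $\sqrt{q}$, then the Gauss sum $G(\chi^j)$ is pure for every positive integer $j$.
   Context: $GP(q,d)$ is the graph on $\mathbb{F}_q$ in which distinct $x,y$ are adjacent iff $x-y$ is a $d$-th power in $\mathbb{F}_q^*$. For a multiplicative character $\chi$ (with $\chi(0)=0$ when $\chi$ is nontrivial, and the trivial character $\chi_0$ taking value $1$ on $\mathbb{F}_q^*$), $G(\chi)=\sum_{c\in\mathbb{F}_q}\chi(c)e_p(\operatorname{Tr}(c))$, where $\operatorname{Tr}$ is the absolute trace to $\mathbb{F}_p$ and $e_p(x)=e^{2\pi i x/p}$. A Gauss sum is pure if some nonzero integral power of it is a real number (in particular $G(\chi_0)=0$ counts as pure). *)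

theory Defs
  imports "HOL-Analysis.Analysis"
begin

definition gp_adj :: "nat \<Rightarrow> 'a::field \<Rightarrow> 'a \<Rightarrow> bool" where
  "gp_adj d x y \<longleftrightarrow> x \<noteq> y \<and> (\<exists>z. z \<noteq> 0 \<and> x - y = z ^ d)"

definition gp_clique :: "nat \<Rightarrow> 'a::field set \<Rightarrow> bool" where
  "gp_clique d S \<longleftrightarrow> (\<forall>x\<in>S. \<forall>y\<in>S. x \<noteq> y \<longrightarrow> gp_adj d x y)"

definition gp_clique_number :: "nat \<Rightarrow> 'a::{field,finite} itself \<Rightarrow> nat" where
  "gp_clique_number d _ = Max {card (S::'a set) | S. gp_clique d S}"

text \<open>Multiplicative character of a finite field, with the convention chi(0)=0 for nontrivial
  chi and chi_0(0)=1 for the trivial character.\<close>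
definition mult_char :: "('a::{field,finite} \<Rightarrow> complex) \<Rightarrow> bool" where
  "mult_char chi \<longleftrightarrow> (\<forall>x. x \<noteq> 0 \<longrightarrow> chi x \<noteq> 0) \<and>
     (\<forall>x y. x \<noteq> 0 \<longrightarrow> y \<noteq> 0 \<longrightarrow> chi (x * y) = chi x * chi y) \<and>
     chi 0 = (if (\<forall>x. x \<noteq> 0 \<longrightarrow> chi x = 1) then 1 else 0)"

definition char_order :: "('a::{field,finite} \<Rightarrow> complex) \<Rightarrow> nat" where
  "char_order chi = (LEAST k. k > 0 \<and> (\<forall>x. x \<noteq> 0 \<longrightarrow> chi x ^ k = 1))"

definition char_pow :: "('a::{field,finite} \<Rightarrow> complex) \<Rightarrow> nat \<Rightarrow> 'a \<Rightarrow> complex" where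
  "char_pow chi j c = (if c = 0 then (if (\<forall>x. x \<noteq> 0 \<longrightarrow> chi x ^ j = 1) then 1 else 0)
                      else chi c ^ j)"

definition abs_trace :: "nat \<Rightarrow> nat \<Rightarrow> 'a::field \<Rightarrow> 'a" where
  "abs_trace p n x = (\<Sum>i<n. x ^ (p ^ i))"

definition e_p :: "nat \<Rightarrow> 'a::field \<Rightarrow> complex" where
  "e_p p y = cis (2 * pi * real (THE k. k < p \<and> of_nat k = y) / real p)"

definition gauss_sum :: "nat \<Rightarrow> nat \<Rightarrow> ('a::{field,finite} \<Rightarrow> complex) \<Rightarrow> complex" where
  "gauss_sum p n chi = (\<Sum>c\<in>UNIV. chi c * e_p p (abs_trace p n c))"

definition pure :: "complex \<Rightarrow> bool" where
  "pure z \<longleftrightarrow> (\<exists>m::int. m \<noteq> 0 \<and> z powi m \<in> \<real>)"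

end

theory Submission
  imports Defs "HOL-Computational_Algebra.Polynomial" "HOL-Number_Theory.Cong" "HOL-Library.Real_Mod"
begin


lemma frob_add:
  fixes x y :: "'a::comm_ring_1"
  assumes "prime (CHAR('a))"
  shows "(x + y) ^ CHAR('a) = x ^ CHAR('a) + y ^ CHAR('a)"
proof -
  let ?p = "CHAR('a)"
  have p1: "?p > 1" using assms prime_gt_1_nat by blast
  have "(x + y) ^ ?p = (\<Sum>k\<le>?p. of_nat (?p choose k) * x ^ k * y ^ (?p - k))"
    by (rule binomial_ring)
  also have "\<dots> = (\<Sum>k\<in>{0, ?p}. of_nat (?p choose k) * x ^ k * y ^ (?p - k))"
  proof (rule sum.mono_neutral_right)
    show "\<forall>i\<in>{..?p} - {0, ?p}. of_nat (?p choose i) * x ^ i * y ^ (?p - i) = 0"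
    proof
      fix i assume i: "i \<in> {..?p} - {0, ?p}"
      have "?p dvd (?p choose i)" using i assms by (intro dvd_choose_prime) auto
      hence "(of_nat (?p choose i) :: 'a) = 0" by (simp add: of_nat_eq_0_iff_char_dvd)
      thus "of_nat (?p choose i) * x ^ i * y ^ (?p - i) = 0" by simp
    qed
  qed auto
  also have "\<dots> = x ^ ?p + y ^ ?p" using p1 by (simp add: add.commute)
  finally show ?thesis .
qed

lemma frob_pow_add:
  fixes x y :: "'a::comm_ring_1"
  assumes "prime (CHAR('a))"
  shows "(x + y) ^ (CHAR('a) ^ i) = x ^ (CHAR('a) ^ i) + y ^ (CHAR('a) ^ i)"
proof (induction i)
  case (Suc i)
  have "(x + y) ^ (CHAR('a) ^ Suc i) = ((x + y) ^ (CHAR('a) ^ i)) ^ CHAR('a)"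
    by (simp add: power_mult[symmetric] mult.commute)
  also have "\<dots> = (x ^ (CHAR('a) ^ i)) ^ CHAR('a) + (y ^ (CHAR('a) ^ i)) ^ CHAR('a)"
    using Suc frob_add[OF assms] by simp
  finally show ?case by (simp add: power_mult[symmetric] mult.commute)
qed simp

lemma fin_field_pow:
  fixes x :: "'a::{field,finite}"
  assumes "x \<noteq> 0"
  shows "x ^ (CARD('a) - 1) = 1"
proof -
  let ?U = "UNIV - {0::'a}"
  have cU: "card ?U = CARD('a) - 1" by (simp add: card_Diff_singleton)
  have "prod (\<lambda>y. y) ?U = prod (\<lambda>y. x * y) ?U"
  proof (rule prod.reindex_bij_witness[where j="\<lambda>y. y / x" and i="\<lambda>y. x * y"])
  qed (use assms in auto)
  also have "\<dots> = x ^ card ?U * prod (\<lambda>y. y) ?U" by (simp add: prod.distrib)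
  finally have "1 * prod (\<lambda>y. y) ?U = x ^ card ?U * prod (\<lambda>y. y) ?U" by simp
  moreover have "prod (\<lambda>y. y) ?U \<noteq> 0" by (simp)
  ultimately have "x ^ card ?U = 1" by (metis mult_right_cancel)
  thus ?thesis using cU by simp
qed

lemma fin_field_pow_card:
  fixes x :: "'a::{field,finite}"
  shows "x ^ CARD('a) = x"
proof (cases "x = 0")
  case False
  have "CARD('a) = Suc (CARD('a) - 1)"
    using finite_UNIV_card_ge_0[where 'a='a] by simp
  hence "x ^ CARD('a) = x * x ^ (CARD('a) - 1)" by (metis power_Suc)
  thus ?thesis using fin_field_pow[OF False] by simp
qed (simp)

lemma frob_sum:
  fixes f :: "'b \<Rightarrow> 'a::comm_ring_1"
  assumes "prime (CHAR('a))" "finite I"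
  shows "(\<Sum>i\<in>I. f i) ^ CHAR('a) = (\<Sum>i\<in>I. f i ^ CHAR('a))"
  using assms(2)
proof (induction I rule: finite_induct)
  case empty
  have "CHAR('a) > 0" using assms(1) prime_gt_0_nat by blast
  thus ?case by (simp add: zero_power)
next
  case (insert a F)
  thus ?case by (simp add: frob_add[OF assms(1)])
qed

lemma of_nat_pow_char:
  assumes "prime (CHAR('a::comm_ring_1))"
  shows "(of_nat k :: 'a) ^ CHAR('a) = of_nat k"
proof (induction k)
  case 0
  have "CHAR('a) > 0" using assms(1) prime_gt_0_nat by blast
  thus ?case by (simp add: zero_power)
next
  case (Suc k)
  have "(of_nat (Suc k) :: 'a) ^ CHAR('a) = (of_nat k + 1) ^ CHAR('a)" by (simp add: add.commute)
  also have "\<dots> = of_nat k + 1" using frob_add[OF assms, of "of_nat k" 1] Suc by simp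
  finally show ?case by (simp add: add.commute)
qed

lemma of_nat_inj_char:
  assumes "a < CHAR('a::comm_ring_1)" "b < CHAR('a)" "(of_nat a :: 'a) = of_nat b"
  shows "a = b"
  using assms by (simp add: of_nat_eq_iff_cong_CHAR cong_def)

lemma prime_field_elem:
  fixes y :: "'a::field"
  assumes "prime (CHAR('a))" "y ^ CHAR('a) = y"
  shows "\<exists>k<CHAR('a). of_nat k = y"
proof -
  let ?p = "CHAR('a)"
  have p1: "?p > 1" using assms prime_gt_1_nat by blast
  define P :: "'a poly" where "P = monom 1 ?p - [:0, 1:]"
  have polyP: "poly P z = z ^ ?p - z" for z by (simp add: P_def poly_monom)
  obtain m where m: "?p = Suc (Suc m)" using p1 by (metis less_imp_Suc_add plus_1_eq_Suc)
  have "coeff P ?p = 1" by (simp add: P_def m)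
  hence P0: "P \<noteq> 0" by auto
  have "degree P \<le> ?p" unfolding P_def
    by (rule degree_diff_le) (use p1 in \<open>auto simp: degree_monom_le\<close>)
  hence cardR: "card {z. poly P z = 0} \<le> ?p" using card_poly_roots_bound[OF P0] by linarith
  have finR: "finite {z. poly P z = 0}" using poly_roots_finite[OF P0] .
  let ?F = "(of_nat :: nat \<Rightarrow> 'a) ` {..<?p}"
  have "inj_on (of_nat :: nat \<Rightarrow> 'a) {..<?p}"
    by (auto simp: inj_on_def intro: of_nat_inj_char)
  hence cF: "card ?F = ?p" by (simp add: card_image)
  have FR: "?F \<subseteq> {z. poly P z = 0}" using of_nat_pow_char[OF assms(1)] by (auto simp: polyP)
  have "card ?F = card {z. poly P z = 0}"
    using card_mono[OF finR FR] cardR cF by linarith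
  hence "?F = {z. poly P z = 0}" using card_subset_eq[OF finR FR] by blast
  moreover have "y \<in> {z. poly P z = 0}" using assms(2) by (simp add: polyP)
  ultimately have "y \<in> ?F" by simp
  thus ?thesis by auto
qed

lemma e_p_of_nat:
  assumes "k < CHAR('a::field)"
  shows "e_p CHAR('a) (of_nat k :: 'a) = cis (2 * pi * real k / real CHAR('a))"
proof -
  have "(THE k'. k' < CHAR('a) \<and> (of_nat k' :: 'a) = of_nat k) = k"
    by (rule the_equality) (use assms of_nat_inj_char in auto)
  thus ?thesis by (simp add: e_p_def)
qed

lemma trace_add:
  fixes x y :: "'a::field"
  assumes "prime (CHAR('a))"
  shows "abs_trace CHAR('a) n (x + y) = abs_trace CHAR('a) n x + abs_trace CHAR('a) n y"
  by (simp add: abs_trace_def frob_pow_add[OF assms] sum.distrib)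

lemma trace_frob:
  fixes x :: "'a::{field,finite}"
  assumes "prime (CHAR('a))" "CARD('a) = CHAR('a) ^ n"
  shows "abs_trace CHAR('a) n x ^ CHAR('a) = abs_trace CHAR('a) n x"
proof -
  let ?p = "CHAR('a)"
  let ?f = "\<lambda>i. x ^ (?p ^ i)"
  have "abs_trace ?p n x ^ ?p = (\<Sum>i<n. ?f i ^ ?p)"
    unfolding abs_trace_def by (rule frob_sum[OF assms(1)]) simp
  also have "\<dots> = (\<Sum>i<n. ?f (Suc i))"
    by (simp add: power_mult[symmetric] mult.commute)
  also have "\<dots> = (\<Sum>i<n. ?f i) + ?f n - ?f 0"
  proof -
    have "(\<Sum>i<Suc n. ?f i) = ?f 0 + (\<Sum>i<n. ?f (Suc i))" by (rule sum.lessThan_Suc_shift)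
    moreover have "(\<Sum>i<Suc n. ?f i) = (\<Sum>i<n. ?f i) + ?f n" by (rule sum.lessThan_Suc)
    ultimately show ?thesis by (metis add_diff_cancel_left')
  qed
  also have "?f n = x" using fin_field_pow_card[of x] assms(2) by simp
  also have "(\<Sum>i<n. ?f i) + x - ?f 0 = abs_trace ?p n x" by (simp add: abs_trace_def)
  finally show ?thesis .
qed

lemma trace_in_prime_field:
  fixes x :: "'a::{field,finite}"
  assumes "prime (CHAR('a))" "CARD('a) = CHAR('a) ^ n"
  shows "\<exists>k<CHAR('a). of_nat k = abs_trace CHAR('a) n x"
  by (rule prime_field_elem[OF assms(1) trace_frob[OF assms]])

definition psi :: "nat \<Rightarrow> 'a::{field,finite} \<Rightarrow> complex" where
  "psi n x = e_p CHAR('a) (abs_trace CHAR('a) n x)"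

lemma psi_add:
  fixes x y :: "'a::{field,finite}"
  assumes "prime (CHAR('a))" "CARD('a) = CHAR('a) ^ n"
  shows "psi n (x + y) = psi n x * psi n y"
proof -
  let ?p = "CHAR('a)"
  obtain a where a: "a < ?p" "of_nat a = abs_trace ?p n x" using trace_in_prime_field[OF assms] by blast
  obtain b where b: "b < ?p" "of_nat b = abs_trace ?p n y" using trace_in_prime_field[OF assms] by blast
  have p0: "?p > 0" using assms prime_gt_0_nat by blast
  have "abs_trace ?p n (x + y) = of_nat (a + b)" using a b trace_add[OF assms(1)] by simp
  also have "(of_nat (a + b) :: 'a) = of_nat ((a + b) mod ?p)"
    unfolding of_nat_eq_iff_cong_CHAR cong_def by simp
  finally have t: "abs_trace ?p n (x + y) = of_nat ((a + b) mod ?p)" .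
  define m where "m = (a + b) div ?p"
  have rm: "real ((a + b) mod ?p) = real (a + b) - real ?p * real m"
    unfolding m_def by (metis div_mult_mod_eq of_nat_add of_nat_mult add_diff_cancel_left' mult.commute)
  have "psi n (x + y) = cis (2 * pi * real ((a + b) mod ?p) / real ?p)"
    unfolding psi_def t using p0 by (intro e_p_of_nat) simp
  also have "2 * pi * real ((a + b) mod ?p) / real ?p = 2 * pi * real (a + b) / real ?p + 2 * pi * real_of_int (- int m)"
    using p0 by (simp add: rm field_simps)
  also have "cis \<dots> = cis (2 * pi * real (a + b) / real ?p)"
    by (simp add: cis_mult[symmetric] del: of_int_minus)
  also have "\<dots> = cis (2 * pi * real a / real ?p) * cis (2 * pi * real b / real ?p)"
    by (simp add: cis_mult add_divide_distrib distrib_left)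
  also have "\<dots> = psi n x * psi n y"
    unfolding psi_def a(2)[symmetric] b(2)[symmetric] using e_p_of_nat[OF a(1)] e_p_of_nat[OF b(1)] by simp
  finally show ?thesis .
qed

lemma norm_psi: "norm (psi n x) = 1"
  by (simp add: psi_def e_p_def)

lemma psi_0:
  assumes "prime (CHAR('a::{field,finite}))"
  shows "psi n (0::'a) = 1"
proof -
  have "CHAR('a) > 0" using assms prime_gt_0_nat by blast
  hence "abs_trace CHAR('a) n (0::'a) = of_nat 0" by (simp add: abs_trace_def zero_power)
  thus ?thesis unfolding psi_def using e_p_of_nat[of 0, where 'a='a] \<open>CHAR('a) > 0\<close> by simp
qed

lemma trace_nonzero:
  fixes dummy :: "'a::{field,finite}"
  assumes "prime (CHAR('a))" "CARD('a) = CHAR('a) ^ n" "n > 0"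
  shows "\<exists>x::'a. abs_trace CHAR('a) n x \<noteq> 0"
proof (rule ccontr)
  assume H: "\<not> ?thesis"
  let ?p = "CHAR('a)"
  have p1: "?p > 1" using assms prime_gt_1_nat by blast
  define Q :: "'a poly" where "Q = (\<Sum>i<n. monom 1 (?p ^ i))"
  have polyQ: "poly Q x = abs_trace ?p n x" for x
    by (simp add: Q_def poly_sum poly_monom abs_trace_def)
  have "coeff Q 1 = (\<Sum>i<n. if ?p ^ i = 1 then 1 else 0)"
    by (simp add: Q_def coeff_sum)
  also have "\<dots> = (\<Sum>i<n. if i = 0 then 1 else 0)"
    by (rule sum.cong) (use p1 in auto)
  also have "\<dots> = (\<Sum>i\<in>{0}. 1)"
    using assms(3) by (simp add: sum.delta)
  finally have "coeff Q 1 = 1" by simp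
  hence Q0: "Q \<noteq> 0" by auto
  have "degree Q \<le> ?p ^ (n - 1)" unfolding Q_def
  proof (rule degree_sum_le)
    fix i assume "i \<in> {..<n}"
    hence "?p ^ i \<le> ?p ^ (n - 1)" using p1 by (intro power_increasing) auto
    thus "degree (monom (1::'a) (?p ^ i)) \<le> ?p ^ (n - 1)" using degree_monom_le order.trans by blast
  qed simp
  moreover have "?p ^ (n - 1) < ?p ^ n" using p1 assms(3) by (intro power_strict_increasing) auto
  moreover have "{x. poly Q x = 0} = UNIV" using H polyQ by auto
  ultimately show False using card_poly_roots_bound[OF Q0] assms(2) by simp
qed

lemma psi_nontriv:
  fixes dummy :: "'a::{field,finite}"
  assumes "prime (CHAR('a))" "CARD('a) = CHAR('a) ^ n" "n > 0"
  shows "\<exists>x::'a. psi n x \<noteq> 1"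
proof -
  let ?p = "CHAR('a)"
  obtain x :: 'a where x: "abs_trace ?p n x \<noteq> 0" using trace_nonzero[OF assms] by blast
  obtain k where k: "k < ?p" "of_nat k = abs_trace ?p n x" using trace_in_prime_field[OF assms(1,2)] by blast
  have k0: "k > 0" using k x by (cases k) auto
  have p0: "?p > 0" using assms prime_gt_0_nat by blast
  have "psi n x \<noteq> 1"
  proof
    assume "psi n x = 1"
    hence "cis (2 * pi * real k / real ?p) = 1" unfolding psi_def k(2)[symmetric] e_p_of_nat[OF k(1)] .
    then obtain m :: int where m: "2 * pi * real k / real ?p = of_int m * (2 * pi)" by (auto simp: cis_eq_1_iff)
    hence "real k = of_int m * real ?p" using p0 by (simp add: field_simps)
    hence "int k = m * int ?p" by (metis of_int_eq_iff of_int_mult of_int_of_nat_eq)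
    moreover have "m > 0" using \<open>int k = m * int ?p\<close> k0 p0 by (smt (verit) mult_nonpos_nonneg of_nat_0_less_iff of_nat_0_le_iff)
    ultimately have "int k \<ge> int ?p" using mult_right_mono[of 1 m "int ?p"] by simp
    thus False using k(1) by simp
  qed
  thus ?thesis by blast
qed

lemma sum_psi:
  fixes dummy :: "'a::{field,finite}"
  assumes "prime (CHAR('a))" "CARD('a) = CHAR('a) ^ n" "n > 0"
  shows "(\<Sum>x::'a\<in>UNIV. psi n x) = 0"
proof -
  obtain x0 :: 'a where x0: "psi n x0 \<noteq> 1" using psi_nontriv[OF assms] by blast
  have "(\<Sum>x::'a\<in>UNIV. psi n x) = (\<Sum>x\<in>UNIV. psi n (x0 + x))"
    by (rule sum.reindex_bij_witness[where i="\<lambda>y. x0 + y" and j="\<lambda>y. y - x0"]) auto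
  also have "\<dots> = psi n x0 * (\<Sum>x::'a\<in>UNIV. psi n x)"
    by (simp add: psi_add[OF assms(1,2)] sum_distrib_left)
  finally have "(1 - psi n x0) * (\<Sum>x::'a\<in>UNIV. psi n x) = 0" by (simp add: algebra_simps)
  thus ?thesis using x0 by simp
qed

lemma sum_psi_mult:
  fixes x :: "'a::{field,finite}"
  assumes "prime (CHAR('a))" "CARD('a) = CHAR('a) ^ n" "n > 0"
  shows "(\<Sum>c\<in>UNIV. psi n (c * x)) = (if x = 0 then of_nat CARD('a) else 0)"
proof (cases "x = 0")
  case True
  thus ?thesis by (simp add: psi_0[OF assms(1)])
next
  case False
  have "(\<Sum>c\<in>UNIV. psi n (c * x)) = (\<Sum>c::'a\<in>UNIV. psi n c)"
    by (rule sum.reindex_bij_witness[where i="\<lambda>y. y / x" and j="\<lambda>y. y * x"]) (use False in auto)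
  thus ?thesis using False sum_psi[OF assms] by simp
qed



lemma cnj_psi:
  fixes y :: "'a::{field,finite}"
  assumes "prime (CHAR('a))" "CARD('a) = CHAR('a) ^ n"
  shows "cnj (psi n y) = psi n (- y)"
proof -
  have "psi n y * psi n (- y) = 1" using psi_add[OF assms, of y "-y"] psi_0[OF assms(1)] by simp
  moreover have "psi n y * cnj (psi n y) = 1"
    using complex_norm_square[of "psi n y"] norm_psi[of n y] by simp
  moreover have "psi n y \<noteq> 0" using norm_psi[of n y] by auto
  ultimately show ?thesis by (metis mult_left_cancel)
qed

lemma norm1_re1:
  fixes z :: complex
  assumes "norm z = 1" "Re z = 1"
  shows "z = 1"
proof -
  have "(Re z)^2 + (Im z)^2 = 1" using assms(1) cmod_power2[of z] by simp
  hence "Im z = 0" using assms(2) by simp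
  thus ?thesis using assms(2) by (simp add: complex_eq_iff)
qed

locale gsetup =
  fixes n :: nat and X :: "'a::{field,finite} \<Rightarrow> complex"
  assumes pr: "prime (CHAR('a))" and card: "CARD('a) = CHAR('a) ^ n" and npos: "n > 0"
    and X0: "X 0 = 0" and Xm: "\<And>a b. X (a * b) = X a * X b"
    and Xn: "\<And>c. c \<noteq> 0 \<Longrightarrow> norm (X c) = 1"
    and Xg: "\<exists>g. g \<noteq> 0 \<and> X g \<noteq> 1"
begin

definition G :: complex where "G = (\<Sum>c\<in>UNIV. X c * psi n c)"

lemma sum_X: "(\<Sum>c\<in>UNIV. X c) = 0"
proof -
  obtain g where g0: "g \<noteq> 0" and g: "X g \<noteq> 1" using Xg by blast
  have "(\<Sum>c\<in>UNIV. X c) = (\<Sum>c\<in>UNIV. X (g * c))"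
    by (rule sum.reindex_bij_witness[where i="\<lambda>y. g * y" and j="\<lambda>y. y / g"]) (use g0 in auto)
  also have "\<dots> = X g * (\<Sum>c\<in>UNIV. X c)" by (simp add: Xm sum_distrib_left)
  finally have "(1 - X g) * (\<Sum>c\<in>UNIV. X c) = 0" by (simp add: algebra_simps)
  thus ?thesis using g by simp
qed

lemma X1: "X 1 = 1"
proof -
  have "X 1 = X 1 * X 1" using Xm[of 1 1] by simp
  moreover have "X 1 \<noteq> 0" using Xn[of 1] by auto
  ultimately show ?thesis by (metis mult_cancel_left1)
qed

lemma X_cnj: "b \<noteq> 0 \<Longrightarrow> X b * cnj (X b) = 1"
  using complex_norm_square[of "X b"] Xn[of b] by simp

lemma keyC:
  assumes "b \<noteq> 0"
  shows "(\<Sum>a\<in>UNIV. X a * psi n (a * b)) = cnj (X b) * G"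
proof -
  have "X b * (\<Sum>a\<in>UNIV. X a * psi n (a * b)) = (\<Sum>a\<in>UNIV. X (a * b) * psi n (a * b))"
    by (simp add: sum_distrib_left Xm algebra_simps)
  also have "\<dots> = G" unfolding G_def
    by (rule sum.reindex_bij_witness[where i="\<lambda>y. y / b" and j="\<lambda>y. y * b"]) (use assms in auto)
  finally have h: "X b * (\<Sum>a\<in>UNIV. X a * psi n (a * b)) = G" .
  have "(\<Sum>a\<in>UNIV. X a * psi n (a * b)) = (cnj (X b) * X b) * (\<Sum>a\<in>UNIV. X a * psi n (a * b))"
    using X_cnj[OF assms] by (simp add: mult.commute)
  also have "\<dots> = cnj (X b) * G" using h by (simp add: mult.assoc)
  finally show ?thesis .
qed

lemma keyA:
  assumes "x \<noteq> 0" "X x = 1"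
  shows "(\<Sum>c\<in>UNIV. X c * psi n (c * x)) = G"
  using keyC[OF assms(1)] assms(2) by simp

lemma keyB: "(\<Sum>c\<in>UNIV. X c * psi n (c * 0)) = 0"
  using sum_X by (simp add: psi_0[OF pr] flip: sum_distrib_right)

lemma G_norm: "G * cnj G = of_nat CARD('a)"
proof -
  have "cnj G = (\<Sum>b\<in>UNIV. cnj (X b) * psi n (- b))"
    unfolding G_def by (simp add: cnj_psi[OF pr card])
  hence "G * cnj G = (\<Sum>b\<in>UNIV. psi n (- b) * (cnj (X b) * G))"
    by (simp add: sum_distrib_left algebra_simps)
  also have "\<dots> = (\<Sum>b\<in>UNIV. psi n (- b) * (\<Sum>a\<in>UNIV. X a * psi n (a * b)))"
  proof (rule sum.cong)
    fix b :: 'a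
    show "psi n (- b) * (cnj (X b) * G) = psi n (- b) * (\<Sum>a\<in>UNIV. X a * psi n (a * b))"
    proof (cases "b = 0")
      case True thus ?thesis using keyB X0 by simp
    next
      case False thus ?thesis using keyC by simp
    qed
  qed simp
  also have "\<dots> = (\<Sum>b\<in>UNIV. \<Sum>a\<in>UNIV. X a * psi n (b * (a - 1)))"
  proof -
    have "psi n (- b) * psi n (a * b) = psi n (b * (a - 1))" for a b :: 'a
      using psi_add[OF pr card, of "-b" "a*b"] by (simp add: algebra_simps)
    thus ?thesis by (simp add: sum_distrib_left algebra_simps)
  qed
  also have "\<dots> = (\<Sum>a\<in>UNIV. X a * (\<Sum>b\<in>UNIV. psi n (b * (a - 1))))"
    by (subst sum.swap) (simp add: sum_distrib_left)
  also have "\<dots> = (\<Sum>a::'a\<in>UNIV. if a = 1 then of_nat CARD('a) else 0)"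
    by (rule sum.cong) (auto simp: sum_psi_mult[OF pr card npos] X1)
  also have "\<dots> = of_nat CARD('a)" by simp
  finally show ?thesis .
qed


lemma clique_key:
  fixes A :: "'a set" and r :: nat
  assumes cA: "card A = r" and r1: "r > 1" and q: "CARD('a) = r ^ 2"
    and cl: "\<And>a b. a \<in> A \<Longrightarrow> b \<in> A \<Longrightarrow> a \<noteq> b \<Longrightarrow> X (a - b) = 1"
  shows "\<exists>c0. c0 \<noteq> 0 \<and> cnj G * X c0 = of_nat r"
proof -
  define Ah where "Ah c = (\<Sum>a\<in>A. psi n (c * a))" for c
  define w where "w c = (\<Sum>a\<in>A. \<Sum>b\<in>A. psi n (c * (a - b)))" for c
  define nw where "nw c = (norm (Ah c))^2" for c
  have finA: "finite A" by simp
  have w_eq: "w c = of_real (nw c)" for c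
  proof -
    have "of_real (nw c) = Ah c * cnj (Ah c)" unfolding nw_def by (rule complex_norm_square)
    also have "\<dots> = (\<Sum>a\<in>A. \<Sum>b\<in>A. psi n (c * a) * cnj (psi n (c * b)))"
      unfolding Ah_def by (simp add: sum_distrib_left sum_distrib_right) (rule sum.swap)
    also have "\<dots> = w c" unfolding w_def
      by (intro sum.cong refl) (simp add: cnj_psi[OF pr card] psi_add[OF pr card, symmetric] algebra_simps)
    finally show ?thesis by simp
  qed
  have S1: "(\<Sum>c\<in>UNIV. X c * w c) = (of_nat r * of_nat r - of_nat r) * G"
  proof -
    have "(\<Sum>c\<in>UNIV. X c * w c) = (\<Sum>a\<in>A. \<Sum>b\<in>A. \<Sum>c\<in>UNIV. X c * psi n (c * (a - b)))"
      unfolding w_def by (simp add: sum_distrib_left sum.swap[of _ UNIV])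
    also have "\<dots> = (\<Sum>a\<in>A. \<Sum>b\<in>A. G - (if b = a then G else 0))"
    proof (intro sum.cong refl)
      fix a b assume ab: "a \<in> A" "b \<in> A"
      show "(\<Sum>c\<in>UNIV. X c * psi n (c * (a - b))) = G - (if b = a then G else 0)"
      proof (cases "b = a")
        case True thus ?thesis using keyB by simp
      next
        case False thus ?thesis using keyA[of "a - b"] cl[OF ab] by simp
      qed
    qed
    also have "\<dots> = (\<Sum>a\<in>A. of_nat r * G - G)"
      using cA by (simp add: sum_subtractf)
    also have "\<dots> = (of_nat r * of_nat r - of_nat r) * G"
      using cA by (simp add: algebra_simps)
    finally show ?thesis .
  qed
  have S2: "(\<Sum>c\<in>UNIV. w c) = of_nat (r ^ 2) * of_nat r"
  proof -
    have "(\<Sum>c\<in>UNIV. w c) = (\<Sum>a\<in>A. \<Sum>b\<in>A. \<Sum>c\<in>UNIV. psi n (c * (a - b)))"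
      unfolding w_def by (simp add: sum.swap[of _ UNIV])
    also have "\<dots> = (\<Sum>a\<in>A. \<Sum>b\<in>A. if b = a then of_nat (r ^ 2) else 0)"
      by (intro sum.cong refl) (simp add: sum_psi_mult[OF pr card npos] q)
    also have "\<dots> = of_nat (r ^ 2) * of_nat r" using cA by simp
    finally show ?thesis .
  qed
  have w0: "w 0 = of_nat r * of_nat r"
    unfolding w_def using cA by (simp add: psi_0[OF pr])
  define U where "U = UNIV - {0::'a}"
  define W where "W = (\<Sum>c\<in>U. nw c)"
  have "of_real W = (\<Sum>c\<in>U. w c)" unfolding W_def by (simp add: w_eq)
  also have "\<dots> = (\<Sum>c\<in>UNIV. w c) - w 0" unfolding U_def by (simp add: sum_diff1)
  also have "\<dots> = of_real (real r ^ 3 - real r ^ 2)" unfolding S2 w0 by (simp add: power2_eq_square power3_eq_cube)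
  finally have W: "W = real r ^ 3 - real r ^ 2" by (simp only: of_real_eq_iff)
  define T where "T = (\<Sum>c\<in>U. X c * w c)"
  have T: "T = (of_nat r * of_nat r - of_nat r) * G"
    unfolding T_def U_def by (simp add: sum_diff1 X0 S1)
  have "(of_real ((norm G)^2) :: complex) = of_nat CARD('a)" using G_norm complex_norm_square[of G] by (simp only: of_real_power)
  hence "(norm G)^2 = (real r)^2" using q by (metis of_nat_power of_real_eq_iff of_real_of_nat_eq)
  hence nG: "norm G = real r" using norm_ge_zero[of G] by (metis of_nat_0_le_iff power2_eq_iff_nonneg)
  have r1': "real r > 1" using r1 by simp
  have nT: "norm T = W"
  proof -
    have "norm T = norm (of_real (real r * real r - real r) * G)" unfolding T by simp
    also have "\<dots> = (real r * real r - real r) * real r" using r1' nG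
      by (simp only: norm_mult norm_of_real) (simp add: power2_eq_square)
    finally show ?thesis unfolding W by (simp add: power2_eq_square power3_eq_cube algebra_simps)
  qed
  have Wpos: "W > 0" unfolding W using r1' by (simp add: power2_eq_square power3_eq_cube) 
  define v where "v = cnj T / of_real W"
  have nv: "norm v = 1" unfolding v_def using nT Wpos by (simp add: norm_divide)
  have nvX: "norm (v * X c) = 1" if "c \<in> U" for c using nv Xn[of c] that by (simp add: U_def norm_mult)
  have "v * T = (T * cnj T) / of_real W" unfolding v_def by (simp only: divide_inverse mult_ac)
  also have "\<dots> = of_real ((norm T)^2 / W)" using complex_norm_square[of T] by simp
  finally have "Re (v * T) = (norm T)^2 / W" by simp
  hence ReW: "Re (v * T) = W" using nT Wpos by (simp add: power2_eq_square)
  have "v * T = (\<Sum>c\<in>U. of_real (nw c) * (v * X c))"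
    unfolding T_def w_eq by (simp add: sum_distrib_left mult_ac)
  hence "Re (v * T) = (\<Sum>c\<in>U. nw c * Re (v * X c))" by (simp add: Re_sum)
  moreover have "(\<Sum>c\<in>U. nw c * (1 - Re (v * X c))) = W - (\<Sum>c\<in>U. nw c * Re (v * X c))"
    unfolding W_def by (simp add: right_diff_distrib sum_subtractf)
  ultimately have "(\<Sum>c\<in>U. nw c * (1 - Re (v * X c))) = 0" using ReW by simp
  moreover have nn: "\<forall>c\<in>U. nw c * (1 - Re (v * X c)) \<ge> 0"
  proof
    fix c assume "c \<in> U"
    have "Re (v * X c) \<le> 1" using complex_Re_le_cmod[of "v * X c"] nvX[OF \<open>c \<in> U\<close>] by simp
    thus "nw c * (1 - Re (v * X c)) \<ge> 0" unfolding nw_def by simp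
  qed
  ultimately have z: "\<forall>c\<in>U. nw c * (1 - Re (v * X c)) = 0"
    using sum_nonneg_eq_0_iff[OF finite, of U "\<lambda>c. nw c * (1 - Re (v * X c))"] by blast
  obtain c0 where c0: "c0 \<in> U" "nw c0 > 0"
  proof (rule ccontr)
    assume "\<not> thesis"
    hence "\<forall>c\<in>U. nw c = 0" using that unfolding nw_def by force
    hence "W = 0" unfolding W_def by simp
    thus False using Wpos by simp
  qed
  have "nw c0 * (1 - Re (v * X c0)) = 0" using z c0 by blast
  hence "Re (v * X c0) = 1" using c0(2) by simp
  hence vX: "v * X c0 = 1" using norm1_re1 nvX[OF c0(1)] by blast
  hence "cnj T * X c0 = of_real W" unfolding v_def using Wpos by (simp add: field_simps)
  hence "(of_nat r * of_nat r - of_nat r) * (cnj G * X c0) = (of_nat r * of_nat r - of_nat r) * of_nat r"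
    unfolding T W by (simp add: algebra_simps power2_eq_square power3_eq_cube)
  moreover have "(of_nat r * of_nat r - of_nat r :: complex) \<noteq> 0"
  proof -
    have "real r * real r - real r \<noteq> 0" using r1' by (simp add: algebra_simps)
    moreover have "(of_nat r * of_nat r - of_nat r :: complex) = of_real (real r * real r - real r)" by simp
    ultimately show ?thesis by (metis of_real_eq_0_iff)
  qed
  ultimately have "cnj G * X c0 = of_nat r" by simp
  thus ?thesis using c0 by (auto simp: U_def)
qed

end


lemma mc_one:
  assumes "mult_char chi"
  shows "chi 1 = 1"
proof -
  have m: "\<And>x y. x \<noteq> 0 \<Longrightarrow> y \<noteq> 0 \<Longrightarrow> chi (x * y) = chi x * chi y"
    using assms unfolding mult_char_def by blast
  have "chi 1 = chi 1 * chi 1" using m[of 1 1] by simp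
  moreover have "\<forall>x. x \<noteq> 0 \<longrightarrow> chi x \<noteq> 0" using assms unfolding mult_char_def by (rule conjunct1)
  hence "chi 1 \<noteq> 0" by simp
  ultimately show ?thesis by (metis mult.right_neutral mult_left_cancel)
qed

lemma mc_pow:
  assumes "mult_char chi" "(x::'a::{field,finite}) \<noteq> 0"
  shows "chi (x ^ k) = chi x ^ k"
proof (induction k)
  case 0 thus ?case using mc_one[OF assms(1)] by simp
next
  case (Suc k)
  have "chi (x ^ Suc k) = chi x * chi (x ^ k)"
    using assms unfolding mult_char_def by simp
  thus ?case using Suc by simp
qed

lemma mc_card:
  assumes "mult_char chi" "(x::'a::{field,finite}) \<noteq> 0"
  shows "chi x ^ (CARD('a) - 1) = 1"
  using mc_pow[OF assms, of "CARD('a) - 1"] fin_field_pow[OF assms(2)] mc_one[OF assms(1)] by simp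

lemma card_ge2: "CARD('a::{field,finite}) \<ge> 2"
proof -
  have "{0::'a, 1} \<subseteq> UNIV" by simp
  hence "card {0::'a, 1} \<le> CARD('a)" using card_mono[of "UNIV::'a set" "{0,1}"] by simp
  thus ?thesis by simp
qed

lemma mc_order:
  assumes "mult_char chi" "char_order chi = d" "(x::'a::{field,finite}) \<noteq> 0"
  shows "chi x ^ d = 1"
proof -
  have ex: "\<exists>k. k > 0 \<and> (\<forall>x::'a. x \<noteq> 0 \<longrightarrow> chi x ^ k = 1)"
    using mc_card[OF assms(1)] card_ge2[where 'a='a] by (intro exI[of _ "CARD('a) - 1"]) auto
  have "d > 0 \<and> (\<forall>x::'a. x \<noteq> 0 \<longrightarrow> chi x ^ d = 1)"
    using LeastI_ex[OF ex] assms(2) unfolding char_order_def by simp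
  thus ?thesis using assms(3) by blast
qed

lemma mc_norm:
  assumes "mult_char chi" "(x::'a::{field,finite}) \<noteq> 0"
  shows "norm (chi x) = 1"
proof -
  have "norm (chi x) ^ (CARD('a) - 1) = 1 ^ (CARD('a) - 1)"
    using mc_card[OF assms] by (simp flip: norm_power)
  moreover have "CARD('a) - 1 > 0" using card_ge2[where 'a='a] by simp
  ultimately show ?thesis using power_eq_imp_eq_base[of "norm (chi x)" "CARD('a) - 1" 1] by simp
qed

theorem proposition3p6:
  fixes chi :: "'a::{field,finite} \<Rightarrow> complex" and p s d :: nat
  assumes "d > 1"
    and "prime p" and "odd p" and "CHAR('a) = p"
    and "CARD('a) = p ^ (2 * s)"
    and "CARD('a) mod (2 * d) = 1"
    and "mult_char chi" and "char_order chi = d"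
    and "real (gp_clique_number d TYPE('a)) = sqrt (real CARD('a))"
  shows "\<forall>j::nat. j > 0 \<longrightarrow> pure (gauss_sum p (2 * s) (char_pow chi j))"
proof (intro allI impI)
  fix j :: nat assume j: "j > 0"
  define X where "X = char_pow chi j"
  define n where "n = 2 * s"
  have pr: "prime (CHAR('a))" using assms by simp
  have card: "CARD('a) = CHAR('a) ^ n" using assms by (simp add: n_def)
  have p3: "p \<ge> 3" using assms(2,3) prime_ge_2_nat[of p] by (cases "p = 2") auto
  have s0: "s > 0"
  proof (rule ccontr)
    assume "\<not> s > 0" hence "CARD('a) = 1" using assms(5) by simp
    thus False using card_ge2[where 'a='a] by simp
  qed
  have npos: "n > 0" using s0 by (simp add: n_def)
  have mc: "\<And>x. x \<noteq> 0 \<Longrightarrow> chi x \<noteq> 0" "\<And>x y. x \<noteq> 0 \<Longrightarrow> y \<noteq> 0 \<Longrightarrow> chi (x * y) = chi x * chi y"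
    using assms(7) unfolding mult_char_def by auto
  have gs: "gauss_sum p (2 * s) X = (\<Sum>c\<in>UNIV. X c * psi n c)"
    unfolding gauss_sum_def psi_def n_def using assms(4) by simp
  show "pure (gauss_sum p (2 * s) X)"
  proof (cases "\<forall>x::'a. x \<noteq> 0 \<longrightarrow> chi x ^ j = 1")
    case True
    hence "X c = 1" for c unfolding X_def char_pow_def by auto
    hence "gauss_sum p (2 * s) X = 0" using sum_psi[OF pr card npos] gs by simp
    thus ?thesis unfolding pure_def by (intro exI[of _ 1]) simp
  next
    case False
    then obtain g :: 'a where g: "g \<noteq> 0" "chi g ^ j \<noteq> 1" by blast
    have Xc: "X c = (if c = 0 then 0 else chi c ^ j)" for c
      unfolding X_def char_pow_def using False by auto
    interpret gsetup n X
    proof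
      show "X 0 = 0" by (simp add: Xc)
      show "X (a * b) = X a * X b" for a b by (simp add: Xc mc(2) power_mult_distrib)
      show "norm (X c) = 1" if "c \<noteq> 0" for c using that mc_norm[OF assms(7) that] by (simp add: Xc norm_power)
      show "\<exists>g. g \<noteq> 0 \<and> X g \<noteq> 1" using g by (auto simp: Xc)
    qed (use pr card npos in auto)
    define r where "r = p ^ s"
    have r1: "r > 1" unfolding r_def using p3 s0 by (intro one_less_power) auto
    have q: "CARD('a) = r ^ 2" unfolding r_def using assms(5) by (simp add: power_mult[symmetric] mult.commute)
    let ?C = "{card (S::'a set) | S. gp_clique d S}"
    have finC: "finite ?C" by (rule finite_subset[of _ "card ` UNIV"]) auto
    have neC: "?C \<noteq> {}" using gp_clique_def by auto
    have "real (Max ?C) = real r"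
      using assms(9) unfolding gp_clique_number_def q by simp
    hence "Max ?C = r" by simp
    hence "r \<in> ?C" using Max_in[OF finC neC] by simp
    then obtain A :: "'a set" where A: "gp_clique d A" "card A = r" by blast
    have cl: "X (a - b) = 1" if ab: "a \<in> A" "b \<in> A" "a \<noteq> b" for a b
    proof -
      obtain z where z: "z \<noteq> 0" "a - b = z ^ d" using A(1) ab unfolding gp_clique_def gp_adj_def by meson
      have "a - b \<noteq> 0" using ab by simp
      hence "X (a - b) = chi (z ^ d) ^ j" unfolding z(2) Xc using z(1) by simp
      also have "\<dots> = (chi z ^ d) ^ j" using mc_pow[OF assms(7) z(1)] by simp
      also have "\<dots> = 1" using mc_order[OF assms(7,8) z(1)] by simp
      finally show ?thesis .
    qed
    obtain c0 where c0: "c0 \<noteq> 0" "cnj G * X c0 = of_nat r"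
      using clique_key[OF A(2) r1 q cl] by blast
    have "X c0 ^ d = (chi c0 ^ d) ^ j" using c0(1) by (simp add: Xc mult.commute flip: power_mult)
    hence "X c0 ^ d = 1" using mc_order[OF assms(7,8) c0(1)] by simp
    moreover have "(cnj G * X c0) ^ d = of_nat r ^ d" using c0(2) by simp
    ultimately have "cnj G ^ d = of_nat r ^ d" by (simp only: power_mult_distrib mult_1_right)
    hence "cnj (G ^ d) = of_nat r ^ d" by (simp only: complex_cnj_power)
    hence "cnj (cnj (G ^ d)) = cnj (of_nat r ^ d)" by (rule arg_cong)
    hence "G ^ d = of_nat (r ^ d)" by (simp only: complex_cnj_cnj complex_cnj_power complex_cnj_of_nat of_nat_power)
    hence "G powi int d \<in> \<real>" by simp
    moreover have "gauss_sum p (2 * s) X = G" using gs G_def by simp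
    ultimately show ?thesis unfolding pure_def using assms(1) by (intro exI[of _ "int d"]) simp
  qed
qed


end
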